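(* Let $\epsilon\in(0,1)$, $\alpha\ge1$, and let $W$ be a mass vector satisfying $(1-\epsilon)H(\theta,\lambda)\le\tilde H(\theta,\lambda)\le(1+\epsilon)H(\theta,\lambda)$ for all $\theta\in\Theta$ and $\lambda\in[\kappa(\theta),\tau(\theta)]$, with $\tilde{\mathbb P}_n=\sum_iw_i\delta_{\xi_i}$. If $\theta_0\in\Theta$ satisfies $R^{\tilde{\mathbb P}_n}_{\sigma,p}(\theta_0)\le\alpha\inf_{\theta\in\Theta}R^{\tilde{\mathbb P}_n}_{\sigma,p}(\theta)$, then $$R^{\mathbb P_n}_{\sigma,p}(\theta_0)\le\alpha\cdot\frac{1+\epsilon}{1-\epsilon}\inf_{\theta\in\Theta}R^{\mathbb P_n}_{\sigma,p}(\theta).$$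
   Context: Setting: $\Xi=\mathbb X\times\mathbb Y$ with $\mathbb X\subseteq\mathbb R^m$, $\mathbb Y\subseteq\mathbb R$, metric $\mathtt d((x,y),(x',y'))=\|x-x'\|+\frac{\gamma}{2}|y-y'|$ ($\|\cdot\|$ a norm on $\mathbb R^m$, $\gamma>0$), $(\Xi,\mathtt d)$ complete. Fix $p\ge1$, $\sigma>0$, data $\xi_1,\dots,\xi_n\in\Xi$ with empirical distribution $\mathbb P_n=\frac1n\sum_i\delta_{\xi_i}$. Loss $\ell:\mathbb R^d\times\Xi\to[0,\infty)$, feasible set $\Theta\subseteq\mathbb R^d$. Assumption: $\ell(\theta,\cdot)$ continuous for each $\theta\in\Theta$, and there are a positive continuous $\mathtt C(\theta)$ and $\xi_0\in\Xi$ with $\ell(\theta,\xi)\le\mathtt C(\theta)(1+\mathtt d^p(\xi,\xi_0))$. The $p$-Wasserstein distance is $W_p(\mathbb P,\mathbb P')=(\inf_{\pi\in\Pi(\mathbb P,\mathbb P')}\int\mathtt d^p(\xi,\xi')\,\pi(d\xi,d\xi'))^{1/p}$; $\mathbb B_{\sigma,p}(\mathbb Q)$ is the set of Borel probability measures on $\Xi$ at $W_p$-distance at most $\sigma$ from $\mathbb Q$; the worst-case risk is $R^{\mathbb Q}_{\sigma,p}(\theta)=\sup_{\mathbb Q'\in\mathbb B_{\sigma,p}(\mathbb Q)}\mathbb E^{\mathbb Q'}[\ell(\theta,\xi)]$. Define $h(\theta,\lambda,\xi)=\sup_{\zeta\in\Xi}\{\ell(\theta,\zeta)-\lambda\mathtt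 d^p(\zeta,\xi)\}$, $h_i(\theta,\lambda)=h(\theta,\lambda,\xi_i)$, $H(\theta,\lambda)=\frac1n\sum_ih_i(\theta,\lambda)$, and for a mass vector $W=[w_1,\dots,w_n]$ ($w_i\ge0,\sum w_i=1$), $\tilde H(\theta,\lambda)=\sum_iw_ih_i(\theta,\lambda)$. Known strong duality (standing fact): for any $\mathbb Q$ with finite $p$-th moment, $R^{\mathbb Q}_{\sigma,p}(\theta)=\inf_{\lambda\ge0}\{\lambda\sigma^p+\mathbb E^{\mathbb Q}[h(\theta,\lambda,\xi)]\}$. Define $\kappa(\theta)=\limsup_{\mathtt d(\xi,\xi_0)\to\infty}\frac{\ell(\theta,\xi)-\ell(\theta,\xi_0)}{\mathtt d^p(\xi,\xi_0)}$; assume $h_i(\theta,\kappa(\theta))<\infty$. Let $\rho=\max_i\mathtt d(\xi_i,\xi_0)$ and $\tau(\theta)=\mathtt C(\theta)(2^{p-1}+\frac{1+2^{p-1}\rho^p}{\sigma^p})$. *)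

theory Defs
  imports "HOL-Probability.Probability"
begin

definition is_norm :: "('a::real_vector \<Rightarrow> real) \<Rightarrow> bool" where
  "is_norm nrm \<longleftrightarrow> (\<forall>x. 0 \<le> nrm x) \<and> (\<forall>x. nrm x = 0 \<longleftrightarrow> x = 0)
     \<and> (\<forall>c x. nrm (c *\<^sub>R x) = \<bar>c\<bar> * nrm x) \<and> (\<forall>x y. nrm (x + y) \<le> nrm x + nrm y)"

definition dxi :: "('a::real_vector \<Rightarrow> real) \<Rightarrow> real \<Rightarrow> ('a \<times> real) \<Rightarrow> ('a \<times> real) \<Rightarrow> real" where
  "dxi nrm \<gamma> u v = nrm (fst u - fst v) + \<gamma> / 2 * \<bar>snd u - snd v\<bar>"

definition d_complete :: "('b \<Rightarrow> 'b \<Rightarrow> real) \<Rightarrow> 'b set \<Rightarrow> bool" where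
  "d_complete d S \<longleftrightarrow> (\<forall>f::nat \<Rightarrow> 'b. (\<forall>k. f k \<in> S) \<longrightarrow>
      (\<forall>e::real>0. \<exists>N::nat. \<forall>m\<ge>N. \<forall>k\<ge>N. d (f m) (f k) < e) \<longrightarrow>
      (\<exists>x\<in>S. \<forall>e::real>0. \<exists>N::nat. \<forall>k\<ge>N. d (f k) x < e))"

text \<open>Borel probability measures on Xi (realised as Borel probability measures on the
  ambient space giving full mass to Xi).\<close>
definition prob_on :: "('b::topological_space) set \<Rightarrow> 'b measure \<Rightarrow> bool" where
  "prob_on S Q \<longleftrightarrow> prob_space Q \<and> sets Q = sets borel \<and> emeasure Q S = 1"

definition couplings :: "('b::topological_space) measure \<Rightarrow> 'b measure \<Rightarrow> ('b \<times> 'b) measure set" where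
  "couplings P P' = {\<pi>. prob_space \<pi> \<and> sets \<pi> = sets borel
       \<and> distr \<pi> borel fst = P \<and> distr \<pi> borel snd = P'}"

definition wass_pow :: "('b::topological_space \<Rightarrow> 'b \<Rightarrow> real) \<Rightarrow> real \<Rightarrow> 'b measure \<Rightarrow> 'b measure \<Rightarrow> ennreal" where
  "wass_pow d p P P' = (INF \<pi>\<in>couplings P P'. \<integral>\<^sup>+ z. ennreal (d (fst z) (snd z) powr p) \<partial>\<pi>)"

text \<open>Wasserstein ball B_{sigma,p}(Q): W_p(Q,Q') <= sigma, i.e. W_p(Q,Q')^p <= sigma^p.\<close>
definition wball :: "('b::topological_space \<Rightarrow> 'b \<Rightarrow> real) \<Rightarrow> 'b set \<Rightarrow> real \<Rightarrow> real \<Rightarrow> 'b measure \<Rightarrow> 'b measure set" where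
  "wball d S p \<sigma> Q = {Q'. prob_on S Q' \<and> wass_pow d p Q Q' \<le> ennreal (\<sigma> powr p)}"

definition wrisk :: "('c \<Rightarrow> 'b::topological_space \<Rightarrow> real) \<Rightarrow> ('b \<Rightarrow> 'b \<Rightarrow> real) \<Rightarrow> 'b set \<Rightarrow> real \<Rightarrow> real
     \<Rightarrow> 'b measure \<Rightarrow> 'c \<Rightarrow> ereal" where
  "wrisk l d S p \<sigma> Q \<theta> = (SUP Q'\<in>wball d S p \<sigma> Q. enn2ereal (\<integral>\<^sup>+ \<xi>. ennreal (l \<theta> \<xi>) \<partial>Q'))"

definition hfun :: "('c \<Rightarrow> 'b \<Rightarrow> real) \<Rightarrow> ('b \<Rightarrow> 'b \<Rightarrow> real) \<Rightarrow> 'b set \<Rightarrow> real \<Rightarrow> 'c \<Rightarrow> real \<Rightarrow> 'b \<Rightarrow> ereal" where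
  "hfun l d S p \<theta> lam \<xi> = (SUP \<zeta>\<in>S. ereal (l \<theta> \<zeta> - lam * d \<zeta> \<xi> powr p))"

definition kappa :: "('c \<Rightarrow> 'b \<Rightarrow> real) \<Rightarrow> ('b \<Rightarrow> 'b \<Rightarrow> real) \<Rightarrow> 'b set \<Rightarrow> real \<Rightarrow> 'b \<Rightarrow> 'c \<Rightarrow> ereal" where
  "kappa l d S p \<xi>0 \<theta> = Limsup (filtercomap (\<lambda>\<xi>. d \<xi> \<xi>0) at_top \<sqinter> principal S)
       (\<lambda>\<xi>. ereal ((l \<theta> \<xi> - l \<theta> \<xi>0) / d \<xi> \<xi>0 powr p))"

definition wemp :: "nat \<Rightarrow> (nat \<Rightarrow> 'b::topological_space) \<Rightarrow> (nat \<Rightarrow> real) \<Rightarrow> 'b measure" where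
  "wemp n \<xi> w = measure_of UNIV (sets borel) (\<lambda>A. \<Sum>i<n. ennreal (w i) * indicator A (\<xi> i))"

end

theory Submission
  imports Defs
begin


lemma powr_sum_le:
  fixes x y p :: real
  assumes "x \<ge> 0" "y \<ge> 0" "p \<ge> 1"
  shows "(x + y) powr p \<le> 2 powr (p - 1) * (x powr p + y powr p)"
proof -
  have two: "2 powr (p - 1) \<ge> 1" using assms by (simp add: ge_one_powr_ge_zero)
  consider "x = 0" | "y = 0" | "x > 0" "y > 0" using assms by linarith
  then show ?thesis
  proof cases
    case 1
    have "y powr p \<le> 2 powr (p - 1) * y powr p" using two by (simp add: mult_le_cancel_right1)
    then show ?thesis using 1 assms by simp
  next
    case 2
    have "x powr p \<le> 2 powr (p - 1) * x powr p" using two by (simp add: mult_le_cancel_right1)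
    then show ?thesis using 2 assms by simp
  next
    case 3
    have "((1 - 1/2) *\<^sub>R x + (1/2) *\<^sub>R y) powr p \<le> (1 - 1/2) * x powr p + (1/2) * y powr p"
      using convex_onD[OF powr_convex[OF assms(3)], of "1/2" x y] 3 by auto
    hence h: "((x + y)/2) powr p \<le> (x powr p + y powr p) / 2" by (simp add: field_simps)
    have e: "2 * ((x+y)/2) = x + y" by simp
    have "(x + y) powr p = (2 * ((x+y)/2)) powr p" by (subst e) (rule refl)
    also have "\<dots> = 2 powr p * ((x+y)/2) powr p" by (rule powr_mult)
    also have "\<dots> \<le> 2 powr p * ((x powr p + y powr p) / 2)"
      using h by (intro mult_left_mono) auto
    also have "\<dots> = 2 powr (p - 1) * (x powr p + y powr p)"
      by (simp add: powr_diff)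
    finally show ?thesis .
  qed
qed

lemma dxi_props:
  assumes "is_norm nrm" "\<gamma> > 0"
  shows "dxi nrm \<gamma> u v \<ge> 0" "dxi nrm \<gamma> u u = 0" "dxi nrm \<gamma> u v = dxi nrm \<gamma> v u"
    "dxi nrm \<gamma> u w \<le> dxi nrm \<gamma> u v + dxi nrm \<gamma> v w"
    "dxi nrm \<gamma> u v = 0 \<Longrightarrow> u = v"
proof -
  have n0: "\<And>x. nrm x \<ge> 0" and nz: "\<And>x. nrm x = 0 \<longleftrightarrow> x = 0"
    and ns: "\<And>c x. nrm (c *\<^sub>R x) = \<bar>c\<bar> * nrm x" and nt: "\<And>x y. nrm (x+y) \<le> nrm x + nrm y"
    using assms(1) unfolding is_norm_def by auto
  show "dxi nrm \<gamma> u v \<ge> 0" unfolding dxi_def using n0[of "fst u - fst v"] assms(2) by simp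
  show "dxi nrm \<gamma> u u = 0" unfolding dxi_def using nz by simp
  have "nrm (fst u - fst v) = nrm (fst v - fst u)"
    using ns[of "-1" "fst v - fst u"] by simp
  then show "dxi nrm \<gamma> u v = dxi nrm \<gamma> v u" unfolding dxi_def by (simp add: abs_minus_commute)
  have "nrm (fst u - fst w) \<le> nrm (fst u - fst v) + nrm (fst v - fst w)"
    using nt[of "fst u - fst v" "fst v - fst w"] by simp
  moreover have "\<bar>snd u - snd w\<bar> \<le> \<bar>snd u - snd v\<bar> + \<bar>snd v - snd w\<bar>" by linarith
  ultimately show "dxi nrm \<gamma> u w \<le> dxi nrm \<gamma> u v + dxi nrm \<gamma> v w"
    unfolding dxi_def using assms(2) mult_left_mono[of "\<bar>snd u - snd w\<bar>" "\<bar>snd u - snd v\<bar> + \<bar>snd v - snd w\<bar>" "\<gamma>/2"]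
    by (simp add: distrib_left)
  assume "dxi nrm \<gamma> u v = 0"
  moreover have "\<gamma> / 2 * \<bar>snd u - snd v\<bar> \<ge> 0" using assms(2) by simp
  ultimately have "nrm (fst u - fst v) = 0" "\<gamma> / 2 * \<bar>snd u - snd v\<bar> = 0" unfolding dxi_def using n0[of "fst u - fst v"]
    by linarith+
  hence "nrm (fst u - fst v) = 0" "\<bar>snd u - snd v\<bar> = 0" using assms(2) by auto
  then show "u = v" using nz by (simp add: prod_eq_iff)
qed

lemma nrm_sum: assumes "is_norm nrm" "finite A" shows "nrm (\<Sum>i\<in>A. f i) \<le> (\<Sum>i\<in>A. nrm (f i))"
  using assms(2)
proof (induction A rule: finite_induct)
  case empty
  have "nrm 0 = 0" using assms(1) unfolding is_norm_def by blast
  then show ?case by simp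
next
  case (insert x F)
  have t: "nrm (f x + sum f F) \<le> nrm (f x) + nrm (sum f F)" using assms(1) unfolding is_norm_def by blast
  have "nrm (sum f (insert x F)) = nrm (f x + sum f F)" using insert.hyps by simp
  also have "\<dots> \<le> nrm (f x) + (\<Sum>i\<in>F. nrm (f i))" using t insert.IH by linarith
  also have "\<dots> = (\<Sum>i\<in>insert x F. nrm (f i))" using insert.hyps by simp
  finally show ?case .
qed

lemma nrm_bound:
  fixes nrm :: "'a::euclidean_space \<Rightarrow> real"
  assumes "is_norm nrm"
  shows "nrm x \<le> (\<Sum>b\<in>Basis. nrm b) * norm x"
proof -
  have ns: "\<And>c x. nrm (c *\<^sub>R x) = \<bar>c\<bar> * nrm x" and n0: "\<And>x. nrm x \<ge> 0"
    using assms unfolding is_norm_def by auto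
  have "nrm x = nrm (\<Sum>b\<in>Basis. (x \<bullet> b) *\<^sub>R b)" by (simp add: euclidean_representation)
  also have "\<dots> \<le> (\<Sum>b\<in>Basis. nrm ((x \<bullet> b) *\<^sub>R b))" by (rule nrm_sum[OF assms]) auto
  also have "\<dots> = (\<Sum>b\<in>Basis. \<bar>x \<bullet> b\<bar> * nrm b)" using ns by simp
  also have "\<dots> \<le> (\<Sum>b\<in>Basis. norm x * nrm b)"
    by (intro sum_mono mult_right_mono) (auto simp: Basis_le_norm n0)
  finally show ?thesis by (simp add: sum_distrib_left mult.commute)
qed



lemma wemp_basic:
  fixes \<xi> :: "nat \<Rightarrow> 'b::topological_space"
  assumes v: "\<forall>i<n. v i \<ge> 0"
  shows "sets (wemp n \<xi> v) = sets borel" "space (wemp n \<xi> v) = UNIV"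
    and "A \<in> sets borel \<Longrightarrow> emeasure (wemp n \<xi> v) A = (\<Sum>i<n. ennreal (v i) * indicator A (\<xi> i))"
proof -
  define \<mu> where "\<mu> = (\<lambda>A. \<Sum>i<n. ennreal (v i) * indicator A (\<xi> i))"
  have W: "wemp n \<xi> v = measure_of (space borel) (sets borel) \<mu>"
    unfolding wemp_def \<mu>_def by simp
  show "sets (wemp n \<xi> v) = sets borel" unfolding W by (rule sets.sets_measure_of_eq)
  show "space (wemp n \<xi> v) = UNIV" unfolding W by simp
  assume A: "A \<in> sets borel"
  have ca: "countably_additive (sets borel) \<mu>"
    unfolding countably_additive_def
  proof (intro allI impI)
    fix F :: "nat \<Rightarrow> 'b set"
    assume "range F \<subseteq> sets borel" "disjoint_family F" "\<Union> (range F) \<in> sets borel"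
    have "(\<Sum>j. \<mu> (F j)) = (\<Sum>i<n. \<Sum>j. ennreal (v i) * indicator (F j) (\<xi> i))"
      unfolding \<mu>_def by (rule suminf_sum) (rule summableI)
    also have "\<dots> = (\<Sum>i<n. ennreal (v i) * indicator (\<Union> (range F)) (\<xi> i))"
      using suminf_indicator[OF \<open>disjoint_family F\<close>] by simp
    finally show "(\<Sum>j. \<mu> (F j)) = \<mu> (\<Union> (range F))" unfolding \<mu>_def .
  qed
  have pos: "positive (sets borel) \<mu>" unfolding positive_def \<mu>_def by simp
  show "emeasure (wemp n \<xi> v) A = (\<Sum>i<n. ennreal (v i) * indicator A (\<xi> i))"
    unfolding W using emeasure_measure_of_sigma[OF sets.sigma_algebra_axioms[of borel, unfolded sigma_algebra_def[symmetric]] pos ca A]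
    unfolding \<mu>_def by simp
qed

lemma wemp_integral:
  fixes \<xi> :: "nat \<Rightarrow> 'b::{t1_space}"
  assumes v: "\<forall>i<n. v i \<ge> 0"
  shows "(\<integral>\<^sup>+ x. f x \<partial>wemp n \<xi> v) = (\<Sum>i<n. ennreal (v i) * f (\<xi> i))"
proof -
  let ?Q = "wemp n \<xi> v"
  define S where "S = \<xi> ` {..<n}"
  have fS: "finite S" unfolding S_def by simp
  have sets: "sets ?Q = sets borel" and em: "\<And>A. A \<in> sets borel \<Longrightarrow> emeasure ?Q A = (\<Sum>i<n. ennreal (v i) * indicator A (\<xi> i))"
    using wemp_basic[OF v] by auto
  have "- S \<in> sets borel" using fS by (simp add: borel_open finite_imp_closed open_Compl)
  moreover have "emeasure ?Q (- S) = 0" using em[OF calculation] unfolding S_def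
    by (simp add: indicator_def)
  ultimately have null: "- S \<in> null_sets ?Q" using sets by (simp add: null_sets_def)
  have AE: "AE x in ?Q. f x = (\<Sum>y\<in>S. f y * indicator {y} x)"
  proof (rule AE_I'[OF null])
    show "{x \<in> space ?Q. f x \<noteq> (\<Sum>y\<in>S. f y * indicator {y} x)} \<subseteq> - S"
    proof
      fix x assume x: "x \<in> {x \<in> space ?Q. f x \<noteq> (\<Sum>y\<in>S. f y * indicator {y} x)}"
      show "x \<in> - S"
      proof
        assume "x \<in> S"
        hence "(\<Sum>y\<in>S. f y * indicator {y} x) = f x"
          using fS by (simp add: indicator_def sum.delta')
        with x show False by simp
      qed
    qed
  qed
  have "(\<integral>\<^sup>+ x. f x \<partial>?Q) = (\<integral>\<^sup>+ x. (\<Sum>y\<in>S. f y * indicator {y} x) \<partial>?Q)"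
    by (rule nn_integral_cong_AE[OF AE])
  also have "\<dots> = (\<Sum>y\<in>S. \<integral>\<^sup>+ x. f y * indicator {y} x \<partial>?Q)"
    by (rule nn_integral_sum) (auto simp: measurable_cong_sets[OF sets refl])
  also have "\<dots> = (\<Sum>y\<in>S. f y * emeasure ?Q {y})"
    by (intro sum.cong refl nn_integral_cmult_indicator) (simp add: sets)
  also have "\<dots> = (\<Sum>y\<in>S. f y * (\<Sum>i<n. ennreal (v i) * indicator {y} (\<xi> i)))"
    by (simp add: em)
  also have "\<dots> = (\<Sum>y\<in>S. \<Sum>i<n. ennreal (v i) * (f y * indicator {y} (\<xi> i)))"
    by (intro sum.cong refl) (simp only: sum_distrib_left, rule sum.cong, rule refl, rule mult.left_commute)
  also have "\<dots> = (\<Sum>i<n. \<Sum>y\<in>S. ennreal (v i) * (f y * indicator {y} (\<xi> i)))"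
    by (rule sum.swap)
  also have "\<dots> = (\<Sum>i<n. ennreal (v i) * (\<Sum>y\<in>S. f y * indicator {y} (\<xi> i)))"
    by (simp only: sum_distrib_left)
  also have "\<dots> = (\<Sum>i<n. ennreal (v i) * f (\<xi> i))"
  proof (intro sum.cong refl)
    fix i assume "i \<in> {..<n}"
    hence "\<xi> i \<in> S" unfolding S_def by simp
    hence "(\<Sum>y\<in>S. f y * indicator {y} (\<xi> i)) = f (\<xi> i)"
      using fS by (simp add: indicator_def sum.delta)
    then show "ennreal (v i) * (\<Sum>y\<in>S. f y * indicator {y} (\<xi> i)) = ennreal (v i) * f (\<xi> i)" by simp
  qed
  finally show ?thesis .
qed

lemma wemp_prob:
  fixes \<xi> :: "nat \<Rightarrow> 'b::{t1_space}"
  assumes v: "\<forall>i<n. v i \<ge> 0" and s: "(\<Sum>i<n. v i) = 1" and S: "S \<in> sets borel" and xi: "\<forall>i<n. \<xi> i \<in> S"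
  shows "prob_on S (wemp n \<xi> v)"
proof -
  have sum1: "(\<Sum>i<n. ennreal (v i)) = 1" using v s by (subst sum_ennreal) auto
  have "emeasure (wemp n \<xi> v) S = (\<Sum>i<n. ennreal (v i) * indicator S (\<xi> i))"
    using wemp_basic(3)[OF v S] .
  also have "\<dots> = (\<Sum>i<n. ennreal (v i))" using xi by (intro sum.cong) auto
  finally have 1: "emeasure (wemp n \<xi> v) S = 1" using sum1 by simp
  have "emeasure (wemp n \<xi> v) UNIV = (\<Sum>i<n. ennreal (v i) * indicator UNIV (\<xi> i))"
    by (rule wemp_basic(3)[OF v]) simp
  also have "\<dots> = (\<Sum>i<n. ennreal (v i))" by (simp only: indicator_UNIV) simp
  finally have u: "emeasure (wemp n \<xi> v) UNIV = 1" using sum1 by simp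
  have sp: "space (wemp n \<xi> v) = UNIV" by (rule wemp_basic(2)[OF v])
  have "emeasure (wemp n \<xi> v) (space (wemp n \<xi> v)) = 1" unfolding sp by (rule u)
  then show ?thesis unfolding prob_on_def using 1 wemp_basic(1)[OF v] by (auto intro: prob_spaceI)
qed




lemma complete_closed:
  fixes nrm :: "'a::euclidean_space \<Rightarrow> real" and S :: "('a \<times> real) set"
  assumes nrm: "is_norm nrm" and g: "\<gamma> > 0" and cpl: "d_complete (dxi nrm \<gamma>) S"
  shows "closed S"
  unfolding closed_sequential_limits
proof (intro allI impI, elim conjE)
  fix x :: "nat \<Rightarrow> 'a \<times> real" and l assume xS: "\<forall>n. x n \<in> S" and lim: "x \<longlonglongrightarrow> l"
  let ?d = "dxi nrm \<gamma>"
  note dp = dxi_props[OF nrm g]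
  define M where "M = (\<Sum>b\<in>Basis. nrm b)"
  have d_le: "?d u v \<le> M * norm (fst u - fst v) + \<gamma>/2 * \<bar>snd u - snd v\<bar>" for u v
    unfolding dxi_def M_def using nrm_bound[OF nrm, of "fst u - fst v"] by simp
  have "(\<lambda>k. M * norm (fst (x k) - fst l) + \<gamma>/2 * \<bar>snd (x k) - snd l\<bar>) \<longlonglongrightarrow> M * norm (fst l - fst l) + \<gamma>/2 * \<bar>snd l - snd l\<bar>"
    by (intro tendsto_intros tendsto_fst[OF lim] tendsto_snd[OF lim])
  hence b0: "(\<lambda>k. M * norm (fst (x k) - fst l) + \<gamma>/2 * \<bar>snd (x k) - snd l\<bar>) \<longlonglongrightarrow> 0" by simp
  have t0: "(\<lambda>k. ?d (x k) l) \<longlonglongrightarrow> 0"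
    by (rule Lim_null_comparison[OF _ b0]) (use dp(1) d_le in auto)
  have ev: "\<exists>N. \<forall>k\<ge>N. ?d (x k) l < e" if "e > 0" for e
  proof -
    have "eventually (\<lambda>k. ?d (x k) l < e) sequentially"
      using order_tendstoD(2)[OF t0] that by auto
    then show ?thesis unfolding eventually_sequentially .
  qed
  have cauchy: "\<forall>e>0. \<exists>N. \<forall>m\<ge>N. \<forall>k\<ge>N. ?d (x m) (x k) < e"
  proof (intro allI impI)
    fix e :: real assume "e > 0"
    then obtain N where N: "\<forall>k\<ge>N. ?d (x k) l < e/2" using ev[of "e/2"] by auto
    have "?d (x m) (x k) < e" if "m \<ge> N" "k \<ge> N" for m k
    proof -
      have "?d (x m) (x k) \<le> ?d (x m) l + ?d l (x k)" by (rule dp(4))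
      also have "?d l (x k) = ?d (x k) l" by (rule dp(3))
      finally show ?thesis using N[rule_format, OF that(1)] N[rule_format, OF that(2)] by linarith
    qed
    then show "\<exists>N. \<forall>m\<ge>N. \<forall>k\<ge>N. ?d (x m) (x k) < e" by blast
  qed
  obtain z where zS: "z \<in> S" and zl: "\<forall>e>0. \<exists>N. \<forall>k\<ge>N. ?d (x k) z < e"
    using cpl xS cauchy unfolding d_complete_def by blast
  have "?d l z = 0"
  proof (rule ccontr)
    assume "?d l z \<noteq> 0"
    hence pos: "?d l z > 0" using dp(1)[of l z] by simp
    obtain N1 where N1: "\<forall>k\<ge>N1. ?d (x k) l < ?d l z / 2" using ev[of "?d l z / 2"] pos by auto
    obtain N2 where N2: "\<forall>k\<ge>N2. ?d (x k) z < ?d l z / 2" using zl pos by (meson half_gt_zero)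
    let ?k = "max N1 N2"
    have "?d l z \<le> ?d l (x ?k) + ?d (x ?k) z" by (rule dp(4))
    also have "?d l (x ?k) = ?d (x ?k) l" by (rule dp(3))
    finally show False using N1[rule_format, of ?k] N2[rule_format, of ?k] by linarith
  qed
  hence "l = z" by (rule dp(5))
  then show "l \<in> S" using zS by simp
qed



lemma h_nonneg:
  assumes "\<xi> \<in> S" "l \<theta> \<xi> \<ge> 0" "d \<xi> \<xi> = 0"
  shows "hfun l d S p \<theta> lam \<xi> \<ge> 0"
proof -
  have "ereal (l \<theta> \<xi> - lam * d \<xi> \<xi> powr p) \<le> hfun l d S p \<theta> lam \<xi>"
    unfolding hfun_def by (rule SUP_upper) (rule assms(1))
  hence "ereal (l \<theta> \<xi>) \<le> hfun l d S p \<theta> lam \<xi>" using assms(3) by simp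
  show ?thesis by (rule order_trans[OF _ \<open>ereal (l \<theta> \<xi>) \<le> hfun l d S p \<theta> lam \<xi>\<close>]) (use assms(2) in simp)
qed



lemma kappa_le_C:
  assumes p: "p \<ge> 1" and Cpos: "c > 0" and x0: "\<xi>0 \<in> S" and l0: "l \<theta> \<xi>0 \<ge> 0"
    and dnn: "\<forall>u v. d u v \<ge> 0"
    and growth: "\<forall>\<zeta>\<in>S. l \<theta> \<zeta> \<le> c * (1 + d \<zeta> \<xi>0 powr p)"
  shows "kappa l d S p \<xi>0 \<theta> \<le> ereal c"
proof (rule ereal_le_epsilon2)
  fix \<delta> :: real assume \<delta>: "\<delta> > 0"
  show "kappa l d S p \<xi>0 \<theta> \<le> ereal c + ereal \<delta>"
    unfolding kappa_def
  proof (rule Limsup_bounded)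
    define N where "N = max 1 (c / \<delta>)"
    have "x \<in> S \<longrightarrow> ereal ((l \<theta> x - l \<theta> \<xi>0) / d x \<xi>0 powr p) \<le> ereal c + ereal \<delta>"
      if xN: "d x \<xi>0 \<ge> N" for x
    proof
      assume xS: "x \<in> S"
      let ?D = "d x \<xi>0"
      let ?P = "?D powr p"
      have D1: "?D \<ge> 1" using xN unfolding N_def by simp
      have "?D powr 1 \<le> ?P" by (rule powr_mono) (use p D1 in auto)
      hence PD: "?P \<ge> ?D" using D1 by simp
      hence Ppos: "?P > 0" using D1 by simp
      have "c / \<delta> \<le> ?P" using PD xN unfolding N_def by simp
      hence cle: "c \<le> \<delta> * ?P" using \<delta> by (simp add: divide_le_eq mult.commute)
      have "l \<theta> x - l \<theta> \<xi>0 \<le> c * (1 + ?P)" using growth[rule_format, OF xS] l0 by linarith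
      also have "\<dots> = c + c * ?P" by (simp add: algebra_simps)
      also have "\<dots> \<le> (c + \<delta>) * ?P" using cle by (simp add: algebra_simps)
      finally have "(l \<theta> x - l \<theta> \<xi>0) / ?P \<le> c + \<delta>" using Ppos by (simp add: pos_divide_le_eq)
      then show "ereal ((l \<theta> x - l \<theta> \<xi>0) / ?P) \<le> ereal c + ereal \<delta>" by simp
    qed
    then show "\<forall>\<^sub>F x in filtercomap (\<lambda>\<xi>. d \<xi> \<xi>0) at_top \<sqinter> principal S.
        ereal ((l \<theta> x - l \<theta> \<xi>0) / d x \<xi>0 powr p) \<le> ereal c + ereal \<delta>"
      unfolding eventually_inf_principal eventually_filtercomap_at_top_linorder by blast
  qed
qed



lemma kappa_far:
  assumes "kappa l d S p \<xi>0 \<theta> > ereal t"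
  shows "\<exists>\<zeta>\<in>S. d \<zeta> \<xi>0 \<ge> D \<and> (l \<theta> \<zeta> - l \<theta> \<xi>0) / d \<zeta> \<xi>0 powr p > t"
proof (rule ccontr)
  assume "\<not> ?thesis"
  hence "\<forall>\<zeta>. d \<zeta> \<xi>0 \<ge> D \<longrightarrow> \<zeta> \<in> S \<longrightarrow> ereal ((l \<theta> \<zeta> - l \<theta> \<xi>0) / d \<zeta> \<xi>0 powr p) \<le> ereal t"
    by (auto simp: not_less)
  hence "\<forall>\<^sub>F x in filtercomap (\<lambda>\<xi>. d \<xi> \<xi>0) at_top \<sqinter> principal S.
        ereal ((l \<theta> x - l \<theta> \<xi>0) / d x \<xi>0 powr p) \<le> ereal t"
    unfolding eventually_inf_principal eventually_filtercomap_at_top_linorder by blast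
  hence "kappa l d S p \<xi>0 \<theta> \<le> ereal t" unfolding kappa_def by (rule Limsup_bounded)
  with assms show False by simp
qed



lemma h_infinite:
  assumes p: "p \<ge> 1" and k: "kappa l d S p \<xi>0 \<theta> = ereal k" and lam: "0 \<le> lam" "lam < k"
    and lnn: "\<forall>\<zeta>\<in>S. l \<theta> \<zeta> \<ge> 0" and x0: "\<xi>0 \<in> S"
    and dnn: "\<forall>u v. d u v \<ge> 0" and tri: "\<forall>u v w. d u w \<le> d u v + d v w"
  shows "hfun l d S p \<theta> lam \<xi> = \<infinity>"
proof -
  define l1 where "l1 = (lam + k) / 2"
  define l2 where "l2 = (lam + l1) / 2"
  have l12: "lam < l2" "l2 < l1" "l1 < k" using lam unfolding l1_def l2_def by auto
  define \<eta> where "\<eta> = (if lam > 0 then ln (l2 / lam) / p else 1)"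
  have \<eta>pos: "\<eta> > 0" unfolding \<eta>_def using l12 p lam by auto
  have \<eta>bound: "lam * (1 + \<eta>) powr p \<le> l2"
  proof (cases "lam > 0")
    case True
    have "(1 + \<eta>) powr p = exp (p * ln (1 + \<eta>))" using \<eta>pos by (simp add: powr_def)
    also have "\<dots> \<le> exp (p * \<eta>)"
    proof -
      have "ln (1 + \<eta>) \<le> \<eta>" by (rule ln_add_one_self_le_self) (use \<eta>pos in simp)
      hence "p * ln (1 + \<eta>) \<le> p * \<eta>" using p by (intro mult_left_mono) auto
      then show ?thesis by simp
    qed
    also have "\<dots> = l2 / lam" unfolding \<eta>_def using True l12 p by simp
    finally have "(1 + \<eta>) powr p * lam \<le> l2" using True by (simp add: pos_le_divide_eq)
    then show ?thesis by (simp add: mult.commute)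
  next
    case False
    then show ?thesis using lam l12 by simp
  qed
  define c where "c = d \<xi>0 \<xi>"
  show ?thesis
    unfolding hfun_def
  proof (rule SUP_PInfty)
    fix m :: nat
    define D where "D = max (max 1 (c / \<eta>)) (real m / (l1 - l2))"
    have "kappa l d S p \<xi>0 \<theta> > ereal l1" using k l12 by simp
    then obtain \<zeta> where \<zeta>S: "\<zeta> \<in> S" and \<zeta>D: "d \<zeta> \<xi>0 \<ge> D"
      and \<zeta>f: "(l \<theta> \<zeta> - l \<theta> \<xi>0) / d \<zeta> \<xi>0 powr p > l1"
      using kappa_far[OF \<open>kappa l d S p \<xi>0 \<theta> > ereal l1\<close>, of D] by blast
    let ?Dz = "d \<zeta> \<xi>0"
    let ?P = "?Dz powr p"
    have D1: "?Dz \<ge> 1" using \<zeta>D unfolding D_def by simp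
    have "?Dz powr 1 \<le> ?P" by (rule powr_mono) (use p D1 in auto)
    hence PD: "?P \<ge> ?Dz" using D1 by simp
    hence Ppos: "?P > 0" using D1 by simp
    have big: "l \<theta> \<zeta> - l \<theta> \<xi>0 > l1 * ?P" using \<zeta>f Ppos by (simp add: less_divide_eq)
    have "c / \<eta> \<le> ?Dz" using \<zeta>D unfolding D_def by simp
    hence cle: "c \<le> ?Dz * \<eta>" using \<eta>pos by (simp add: pos_divide_le_eq)
    have "d \<zeta> \<xi> \<le> ?Dz + c" unfolding c_def using tri by blast
    also have "\<dots> \<le> (1 + \<eta>) * ?Dz" using cle by (simp add: algebra_simps)
    finally have dle: "d \<zeta> \<xi> \<le> (1 + \<eta>) * ?Dz" .
    have "d \<zeta> \<xi> powr p \<le> ((1 + \<eta>) * ?Dz) powr p"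
      by (rule powr_mono2) (use p dnn dle in auto)
    also have "\<dots> = (1 + \<eta>) powr p * ?P" using \<eta>pos dnn by (simp add: powr_mult)
    finally have "lam * d \<zeta> \<xi> powr p \<le> lam * ((1 + \<eta>) powr p * ?P)"
      using lam by (simp add: mult_left_mono)
    also have "\<dots> = lam * (1 + \<eta>) powr p * ?P" by (simp add: mult.assoc)
    also have "\<dots> \<le> l2 * ?P" by (rule mult_right_mono[OF \<eta>bound]) (use Ppos in simp)
    finally have hle: "lam * d \<zeta> \<xi> powr p \<le> l2 * ?P" .
    have mD: "real m / (l1 - l2) \<le> D" unfolding D_def by simp
    have "real m \<le> D * (l1 - l2)" using mD l12 by (simp add: pos_divide_le_eq)
    also have "\<dots> \<le> ?P * (l1 - l2)" using \<zeta>D PD l12 by (intro mult_right_mono) auto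
    also have "\<dots> \<le> l \<theta> \<zeta> - lam * d \<zeta> \<xi> powr p"
    proof -
      have "l \<theta> \<xi>0 \<ge> 0" using lnn x0 by blast
      moreover have "?P * (l1 - l2) = l1 * ?P - l2 * ?P" by (simp add: algebra_simps)
      ultimately show ?thesis using big hle by linarith
    qed
    finally show "\<exists>i\<in>S. ereal (real m) \<le> ereal (l \<theta> i - lam * d i \<xi> powr p)" using \<zeta>S by auto
  qed
qed



lemma h_bound:
  assumes p: "p \<ge> 1" and Cpos: "c > 0" and \<rho>: "d \<xi> \<xi>0 \<le> \<rho>"
    and dnn: "\<forall>u v. d u v \<ge> 0" and tri: "\<forall>u v w. d u w \<le> d u v + d v w"
    and growth: "\<forall>\<zeta>\<in>S. l \<theta> \<zeta> \<le> c * (1 + d \<zeta> \<xi>0 powr p)"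
  shows "hfun l d S p \<theta> (c * 2 powr (p - 1)) \<xi> \<le> ereal (c * (1 + 2 powr (p - 1) * \<rho> powr p))"
  unfolding hfun_def
proof (rule SUP_least)
  fix \<zeta> assume \<zeta>S: "\<zeta> \<in> S"
  let ?x = "d \<zeta> \<xi> powr p"
  have "d \<zeta> \<xi>0 \<le> d \<zeta> \<xi> + d \<xi> \<xi>0" using tri by blast
  hence "d \<zeta> \<xi>0 \<le> d \<zeta> \<xi> + \<rho>" using \<rho> by linarith
  hence "d \<zeta> \<xi>0 powr p \<le> (d \<zeta> \<xi> + \<rho>) powr p"
    by (intro powr_mono2) (use p dnn in auto)
  also have "\<dots> \<le> 2 powr (p - 1) * (?x + \<rho> powr p)"
  proof (rule powr_sum_le)
    show "0 \<le> d \<zeta> \<xi>" using dnn by blast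
    show "0 \<le> \<rho>" using dnn[rule_format, of \<xi> \<xi>0] \<rho> by linarith
  qed (rule p)
  finally have e: "d \<zeta> \<xi>0 powr p \<le> 2 powr (p - 1) * (?x + \<rho> powr p)" .
  have "c * (1 + d \<zeta> \<xi>0 powr p) \<le> c * (1 + 2 powr (p - 1) * (?x + \<rho> powr p))"
    using e Cpos by (intro mult_left_mono) auto
  hence "l \<theta> \<zeta> \<le> c * (1 + 2 powr (p - 1) * (?x + \<rho> powr p))"
    using growth[rule_format, OF \<zeta>S] by linarith
  moreover have "c * (1 + 2 powr (p - 1) * (?x + \<rho> powr p)) = c * (1 + 2 powr (p - 1) * \<rho> powr p) + c * 2 powr (p - 1) * ?x"
    by (simp add: algebra_simps)
  ultimately show "ereal (l \<theta> \<zeta> - c * 2 powr (p - 1) * ?x) \<le> ereal (c * (1 + 2 powr (p - 1) * \<rho> powr p))"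
    by simp
qed




theorem corollary1:
  fixes nrm :: "'a::euclidean_space \<Rightarrow> real"
    and \<gamma> p \<sigma> \<epsilon> \<alpha> :: real
    and X :: "'a set" and Y :: "real set"
    and n :: nat and \<xi> :: "nat \<Rightarrow> 'a \<times> real" and w :: "nat \<Rightarrow> real"
    and l :: "'c::euclidean_space \<Rightarrow> 'a \<times> real \<Rightarrow> real" and \<Theta> :: "'c set"
    and C :: "'c \<Rightarrow> real" and \<xi>0 :: "'a \<times> real" and \<theta>0 :: 'c
    and \<Xi> :: "('a \<times> real) set" and d :: "'a \<times> real \<Rightarrow> 'a \<times> real \<Rightarrow> real"
    and h :: "'c \<Rightarrow> real \<Rightarrow> 'a \<times> real \<Rightarrow> ereal"
    and H Ht :: "'c \<Rightarrow> real \<Rightarrow> ereal" and \<rho> :: real and \<tau> :: "'c \<Rightarrow> real"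
    and R :: "('a \<times> real) measure \<Rightarrow> 'c \<Rightarrow> ereal" and Pn Pt :: "('a \<times> real) measure"
  assumes "\<Xi> = X \<times> Y"
    and "d = dxi nrm \<gamma>"
    and "h = hfun l d \<Xi> p"
    and "H = (\<lambda>\<theta> lam. ereal (1 / real n) * (\<Sum>i<n. h \<theta> lam (\<xi> i)))"
    and "Ht = (\<lambda>\<theta> lam. \<Sum>i<n. ereal (w i) * h \<theta> lam (\<xi> i))"
    and "\<rho> = Max ((\<lambda>i. d (\<xi> i) \<xi>0) ` {..<n})"
    and "\<tau> = (\<lambda>\<theta>. C \<theta> * (2 powr (p - 1) + (1 + 2 powr (p - 1) * \<rho> powr p) / \<sigma> powr p))"
    and "R = wrisk l d \<Xi> p \<sigma>"
    and "Pn = wemp n \<xi> (\<lambda>_. 1 / real n)"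
    and "Pt = wemp n \<xi> w"
    and norm: "is_norm nrm"
    and gamma_pos: "\<gamma> > 0"
    and complete: "d_complete d \<Xi>"
    and p_ge: "p \<ge> 1" and sigma_pos: "\<sigma> > 0"
    and n_pos: "n \<ge> 1" and data: "\<forall>i<n. \<xi> i \<in> \<Xi>"
    and l_nonneg: "\<forall>\<theta> \<zeta>. \<zeta> \<in> \<Xi> \<longrightarrow> l \<theta> \<zeta> \<ge> 0"
    and l_cont: "\<forall>\<theta>\<in>\<Theta>. continuous_on \<Xi> (l \<theta>)"
    and C_pos: "\<forall>\<theta>. C \<theta> > 0" and C_cont: "continuous_on UNIV C"
    and xi0: "\<xi>0 \<in> \<Xi>"
    and growth: "\<forall>\<theta>\<in>\<Theta>. \<forall>\<zeta>\<in>\<Xi>. l \<theta> \<zeta> \<le> C \<theta> * (1 + d \<zeta> \<xi>0 powr p)"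
    and kappa_fin: "\<forall>\<theta>\<in>\<Theta>. \<bar>kappa l d \<Xi> p \<xi>0 \<theta>\<bar> \<noteq> \<infinity> \<and>
                      (\<forall>i<n. h \<theta> (real_of_ereal (kappa l d \<Xi> p \<xi>0 \<theta>)) (\<xi> i) < \<infinity>)"
    and duality: "\<forall>\<theta>\<in>\<Theta>. \<forall>Q. prob_on \<Xi> Q \<and> (\<integral>\<^sup>+ \<zeta>. ennreal (d \<zeta> \<xi>0 powr p) \<partial>Q) < \<infinity> \<longrightarrow>
                    R Q \<theta> = (INF lam\<in>{0..}. ereal (lam * \<sigma> powr p)
                                + enn2ereal (\<integral>\<^sup>+ \<zeta>. e2ennreal (h \<theta> lam \<zeta>) \<partial>Q))"
    and eps: "0 < \<epsilon>" "\<epsilon> < 1" and alpha: "\<alpha> \<ge> 1"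
    and w_nonneg: "\<forall>i<n. w i \<ge> 0" and w_sum: "(\<Sum>i<n. w i) = 1"
    and coreset: "\<forall>\<theta>\<in>\<Theta>. \<forall>lam::real. kappa l d \<Xi> p \<xi>0 \<theta> \<le> ereal lam \<and> lam \<le> \<tau> \<theta> \<longrightarrow>
                    ereal (1 - \<epsilon>) * H \<theta> lam \<le> Ht \<theta> lam \<and> Ht \<theta> lam \<le> ereal (1 + \<epsilon>) * H \<theta> lam"
    and theta0: "\<theta>0 \<in> \<Theta>"
    and approx: "R Pt \<theta>0 \<le> ereal \<alpha> * (INF \<theta>\<in>\<Theta>. R Pt \<theta>)"
  shows "R Pn \<theta>0 \<le> ereal (\<alpha> * (1 + \<epsilon>) / (1 - \<epsilon>)) * (INF \<theta>\<in>\<Theta>. R Pn \<theta>)"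
proof -
  note dp = dxi_props[OF norm gamma_pos]
  have dnn: "\<forall>u v. d u v \<ge> 0" using dp(1) assms(2) by simp
  have d0: "\<forall>u. d u u = 0" using dp(2) assms(2) by simp
  have tri: "\<forall>u v w. d u w \<le> d u v + d v w" using dp(4) assms(2) by simp
  have "closed \<Xi>" by (rule complete_closed[OF norm gamma_pos]) (use complete assms(2) in simp)
  hence \<Xi>b: "\<Xi> \<in> sets borel" by (rule borel_closed)
  have \<rho>_ge: "d (\<xi> i) \<xi>0 \<le> \<rho>" if "i < n" for i
    unfolding assms(6) by (rule Max_ge) (use that in auto)
  have \<rho>nn: "\<rho> \<ge> 0" using \<rho>_ge[of 0] n_pos dnn by (meson order_trans less_le_trans zero_less_one le_less_trans not_less)
  have hnn: "h \<theta> lam (\<xi> i) \<ge> 0" if "i < n" for \<theta> lam i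
  proof -
    have xi: "\<xi> i \<in> \<Xi>" using data that by blast
    show ?thesis unfolding assms(3) by (rule h_nonneg[OF xi]) (use l_nonneg xi d0 in blast)+
  qed
  have two: "2 powr (p-1) \<ge> 1" using p_ge by (simp add: ge_one_powr_ge_zero)
  have sp: "\<sigma> powr p > 0" using sigma_pos by simp
  have key: "R (wemp n \<xi> v) \<theta> = (INF lam\<in>{lam. 0 \<le> lam \<and> kappa l d \<Xi> p \<xi>0 \<theta> \<le> ereal lam \<and> lam \<le> \<tau> \<theta>}.
               ereal (lam * \<sigma> powr p) + (\<Sum>i<n. ereal (v i) * h \<theta> lam (\<xi> i)))"
    if \<theta>: "\<theta> \<in> \<Theta>" and v: "\<forall>i<n. v i \<ge> 0" "(\<Sum>i<n. v i) = 1" for \<theta> v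
  proof -
    let ?Q = "wemp n \<xi> v"
    define J where "J = {lam. 0 \<le> lam \<and> kappa l d \<Xi> p \<xi>0 \<theta> \<le> ereal lam \<and> lam \<le> \<tau> \<theta>}"
    define F where "F = (\<lambda>lam. ereal (lam * \<sigma> powr p) + (\<Sum>i<n. ereal (v i) * h \<theta> lam (\<xi> i)))"
    have prob: "prob_on \<Xi> ?Q" by (rule wemp_prob[OF v \<Xi>b data])
    have mom: "(\<integral>\<^sup>+ \<zeta>. ennreal (d \<zeta> \<xi>0 powr p) \<partial>?Q) < \<infinity>"
      unfolding wemp_integral[OF v(1)] by (simp add: ennreal_mult_less_top)
    have int: "(\<integral>\<^sup>+ \<zeta>. e2ennreal (h \<theta> lam \<zeta>) \<partial>?Q) = (\<Sum>i<n. ennreal (v i) * e2ennreal (h \<theta> lam (\<xi> i)))" for lam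
      by (rule wemp_integral[OF v(1)])
    have conv: "enn2ereal (\<Sum>i<n. ennreal (v i) * e2ennreal (h \<theta> lam (\<xi> i))) = (\<Sum>i<n. ereal (v i) * h \<theta> lam (\<xi> i))" for lam
    proof -
      have "enn2ereal (\<Sum>i<n. ennreal (v i) * e2ennreal (h \<theta> lam (\<xi> i))) = (\<Sum>i<n. enn2ereal (ennreal (v i) * e2ennreal (h \<theta> lam (\<xi> i))))"
        by (rule sum_enn2ereal[symmetric]) simp
      also have "\<dots> = (\<Sum>i<n. ereal (v i) * h \<theta> lam (\<xi> i))"
        using v(1) hnn by (intro sum.cong refl) (simp add: times_ennreal.rep_eq enn2ereal_e2ennreal)
      finally show ?thesis .
    qed
    have d1: "R ?Q \<theta> = (INF lam\<in>{0..}. ereal (lam * \<sigma> powr p) + enn2ereal (\<integral>\<^sup>+ \<zeta>. e2ennreal (h \<theta> lam \<zeta>) \<partial>?Q))"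
      using duality \<theta> prob mom by blast
    have R_eq: "R ?Q \<theta> = (INF lam\<in>{0..}. F lam)" unfolding d1 int conv F_def ..
    have JS: "J \<subseteq> {0..}" by (auto simp: J_def)
    have "(INF lam\<in>{0..}. F lam) = (INF lam\<in>J. F lam)"
    proof (rule antisym)
      show "(INF lam\<in>{0..}. F lam) \<le> (INF lam\<in>J. F lam)" by (rule INF_superset_mono[OF JS]) simp
      show "(INF lam\<in>J. F lam) \<le> (INF lam\<in>{0..}. F lam)"
      proof (rule INF_greatest)
        fix lam :: real assume "lam \<in> {0..}" hence lam0: "0 \<le> lam" by simp
        have C\<theta>: "C \<theta> > 0" using C_pos by blast
        define a where "a = C \<theta> * 2 powr (p - 1)"
        define K where "K = C \<theta> * (1 + 2 powr (p - 1) * \<rho> powr p)"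
        have kC: "kappa l d \<Xi> p \<xi>0 \<theta> \<le> ereal (C \<theta>)"
          by (rule kappa_le_C[OF p_ge C\<theta> xi0]) (use l_nonneg[rule_format, OF xi0] dnn growth \<theta> in auto)
        have aJ: "a \<in> J"
        proof -
          have Ca: "C \<theta> \<le> a" unfolding a_def using C\<theta> two by simp
          have "0 \<le> (1 + 2 powr (p - 1) * \<rho> powr p) / \<sigma> powr p" using \<rho>nn sigma_pos by simp
          hence "0 \<le> C \<theta> * ((1 + 2 powr (p - 1) * \<rho> powr p) / \<sigma> powr p)" using C\<theta> by simp
          moreover have "\<tau> \<theta> = a + C \<theta> * ((1 + 2 powr (p - 1) * \<rho> powr p) / \<sigma> powr p)"
            unfolding assms(7) a_def by (simp add: distrib_left)
          ultimately have "a \<le> \<tau> \<theta>" by linarith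
          moreover have "kappa l d \<Xi> p \<xi>0 \<theta> \<le> ereal a" using kC Ca by (meson ereal_less_eq(3) order_trans)
          moreover have "0 \<le> a" using Ca C\<theta> by linarith
          ultimately show ?thesis unfolding J_def by simp
        qed
        have Fa: "F a \<le> ereal (a * \<sigma> powr p + K)"
        proof -
          have hb: "h \<theta> a (\<xi> i) \<le> ereal K" if "i < n" for i
            unfolding assms(3) a_def K_def
            by (rule h_bound[OF p_ge C\<theta>]) (use \<rho>_ge[OF that] dnn tri growth \<theta> in auto)
          have "(\<Sum>i<n. ereal (v i) * h \<theta> a (\<xi> i)) \<le> (\<Sum>i<n. ereal (v i) * ereal K)"
            by (intro sum_mono ereal_mult_left_mono) (use v hb in auto)
          also have "\<dots> = ereal K" using v(2) by (simp add: sum_distrib_right[symmetric])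
          finally have "F a \<le> ereal (a * \<sigma> powr p) + ereal K" unfolding F_def by (rule add_left_mono)
          then show ?thesis by simp
        qed
        have Fnn: "ereal (lam * \<sigma> powr p) \<le> F lam"
        proof -
          have "0 \<le> (\<Sum>i<n. ereal (v i) * h \<theta> lam (\<xi> i))"
            by (intro sum_nonneg) (use v hnn in \<open>auto intro!: ereal_mult_left_mono[of 0, simplified]\<close>)
          then show ?thesis unfolding F_def by (rule add_increasing2) simp
        qed
        consider (inJ) "lam \<in> J" | (low) "\<not> kappa l d \<Xi> p \<xi>0 \<theta> \<le> ereal lam" | (high) "lam > \<tau> \<theta>"
          using lam0 unfolding J_def by force
        then show "(INF lam\<in>J. F lam) \<le> F lam"
        proof cases
          case inJ then show ?thesis by (rule INF_lower)
        next
          case low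
          obtain k where k: "kappa l d \<Xi> p \<xi>0 \<theta> = ereal k"
            using kappa_fin \<theta> by (cases "kappa l d \<Xi> p \<xi>0 \<theta>") auto
          have lk: "lam < k" using low k by simp
          have hinf: "h \<theta> lam (\<xi> i) = \<infinity>" for i
            unfolding assms(3) by (rule h_infinite[OF p_ge k lam0 lk]) (use l_nonneg xi0 dnn tri in auto)
          have "\<exists>i<n. v i > 0"
          proof (rule ccontr)
            assume "\<not> (\<exists>i<n. v i > 0)"
            hence "\<forall>i<n. v i = 0" using v(1) by force
            hence "(\<Sum>i<n. v i) = 0" by simp
            with v(2) show False by simp
          qed
          then obtain i where i: "i < n" "v i > 0" by blast
          have "(\<Sum>i<n. ereal (v i) * h \<theta> lam (\<xi> i)) = \<infinity>"
            unfolding sum_Pinfty using i hinf by auto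
          then have "F lam = \<infinity>" unfolding F_def by simp
          then show ?thesis by simp
        next
          case high
          have te: "\<tau> \<theta> * \<sigma> powr p = a * \<sigma> powr p + K"
            unfolding assms(7) a_def K_def using sp by (simp add: field_simps)
          have "(INF lam\<in>J. F lam) \<le> F a" by (rule INF_lower[OF aJ])
          also have "\<dots> \<le> ereal (a * \<sigma> powr p + K)" by (rule Fa)
          also have "\<dots> = ereal (\<tau> \<theta> * \<sigma> powr p)" using te by simp
          also have "\<dots> \<le> ereal (lam * \<sigma> powr p)" using high sp by simp
          also have "\<dots> \<le> F lam" by (rule Fnn)
          finally show ?thesis .
        qed
      qed
    qed
    then show ?thesis using R_eq unfolding J_def F_def by simp
  qed
  define J where "J = (\<lambda>\<theta>. {lam. 0 \<le> lam \<and> kappa l d \<Xi> p \<xi>0 \<theta> \<le> ereal lam \<and> lam \<le> \<tau> \<theta>})"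
  have vn: "\<forall>i<n. (\<lambda>_. 1 / real n) i \<ge> 0" by simp
  have vs: "(\<Sum>i<n. (\<lambda>_. 1 / real n) i) = 1" using n_pos by simp
  have HH: "H \<theta> lam = (\<Sum>i<n. ereal (1 / real n) * h \<theta> lam (\<xi> i))" for \<theta> lam
    unfolding assms(4) using sum_distrib_right_ereal[of "1/real n" "\<lambda>i. h \<theta> lam (\<xi> i)" "{..<n}"]
    by (simp add: mult.commute)
  have RPn: "R Pn \<theta> = (INF lam\<in>J \<theta>. ereal (lam * \<sigma> powr p) + H \<theta> lam)" if "\<theta> \<in> \<Theta>" for \<theta>
    unfolding assms(9) J_def HH using key[OF that vn vs] by simp
  have RPt: "R Pt \<theta> = (INF lam\<in>J \<theta>. ereal (lam * \<sigma> powr p) + Ht \<theta> lam)" if "\<theta> \<in> \<Theta>" for \<theta>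
    unfolding assms(10) J_def assms(5) using key[OF that w_nonneg w_sum] by simp
  have Hnn: "H \<theta> lam \<ge> 0" for \<theta> lam
    unfolding HH by (intro sum_nonneg) (use hnn in \<open>auto intro!: ereal_mult_left_mono[of 0, simplified]\<close>)
  have cor: "ereal (1-\<epsilon>) * H \<theta> lam \<le> Ht \<theta> lam \<and> Ht \<theta> lam \<le> ereal (1+\<epsilon>) * H \<theta> lam"
    if "\<theta> \<in> \<Theta>" "lam \<in> J \<theta>" for \<theta> lam
    using coreset that unfolding J_def by blast
  have xle: "ereal (c * (lam * \<sigma> powr p)) \<le> ereal (lam * \<sigma> powr p)" if "lam \<ge> 0" "0 \<le> c" "c \<le> 1" for c lam
  proof -
    have "0 \<le> lam * \<sigma> powr p" using that sp by simp
    then show ?thesis using that by (simp add: mult_left_le_one_le)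
  qed
  have c1: "ereal (1-\<epsilon>) * R Pn \<theta>0 \<le> R Pt \<theta>0"
    unfolding RPn[OF theta0] RPt[OF theta0]
  proof (rule INF_greatest)
    fix lam assume lJ: "lam \<in> J \<theta>0"
    have "ereal (1-\<epsilon>) * (INF lam\<in>J \<theta>0. ereal (lam * \<sigma> powr p) + H \<theta>0 lam) \<le> ereal (1-\<epsilon>) * (ereal (lam * \<sigma> powr p) + H \<theta>0 lam)"
      by (rule ereal_mult_left_mono) (use lJ eps in \<open>auto intro: INF_lower\<close>)
    also have "\<dots> = ereal ((1-\<epsilon>) * (lam * \<sigma> powr p)) + ereal (1-\<epsilon>) * H \<theta>0 lam"
      by (subst ereal_distrib_left) (use Hnn[of \<theta>0 lam] in auto)
    also have "\<dots> \<le> ereal (lam * \<sigma> powr p) + Ht \<theta>0 lam"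
    proof (rule add_mono)
      show "ereal ((1-\<epsilon>) * (lam * \<sigma> powr p)) \<le> ereal (lam * \<sigma> powr p)"
        by (rule xle) (use lJ eps in \<open>auto simp: J_def\<close>)
      show "ereal (1-\<epsilon>) * H \<theta>0 lam \<le> Ht \<theta>0 lam" using cor[OF theta0 lJ] by blast
    qed
    finally show "ereal (1-\<epsilon>) * (INF lam\<in>J \<theta>0. ereal (lam * \<sigma> powr p) + H \<theta>0 lam) \<le> ereal (lam * \<sigma> powr p) + Ht \<theta>0 lam" .
  qed
  have one1: "ereal (1/(1+\<epsilon>)) * ereal (1+\<epsilon>) = 1" using eps by simp
  have one2: "ereal (1+\<epsilon>) * ereal (1/(1+\<epsilon>)) = 1" using eps by simp
  have one3: "ereal (1/(1-\<epsilon>)) * ereal (1-\<epsilon>) = 1" using eps by simp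
  have c2: "ereal (1/(1+\<epsilon>)) * R Pt \<theta> \<le> R Pn \<theta>" if \<theta>: "\<theta> \<in> \<Theta>" for \<theta>
    unfolding RPn[OF \<theta>] RPt[OF \<theta>]
  proof (rule INF_greatest)
    fix lam assume lJ: "lam \<in> J \<theta>"
    have "ereal (1/(1+\<epsilon>)) * (INF lam\<in>J \<theta>. ereal (lam * \<sigma> powr p) + Ht \<theta> lam) \<le> ereal (1/(1+\<epsilon>)) * (ereal (lam * \<sigma> powr p) + Ht \<theta> lam)"
      by (rule ereal_mult_left_mono) (use lJ eps in \<open>auto intro: INF_lower\<close>)
    also have "\<dots> \<le> ereal (1/(1+\<epsilon>)) * (ereal (lam * \<sigma> powr p) + ereal (1+\<epsilon>) * H \<theta> lam)"
      by (intro ereal_mult_left_mono add_left_mono) (use cor[OF \<theta> lJ] eps in auto)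
    also have "\<dots> = ereal (1/(1+\<epsilon>) * (lam * \<sigma> powr p)) + ereal (1/(1+\<epsilon>)) * (ereal (1+\<epsilon>) * H \<theta> lam)"
      by (subst ereal_distrib_left) (use Hnn[of \<theta> lam] eps in auto)
    also have "ereal (1/(1+\<epsilon>)) * (ereal (1+\<epsilon>) * H \<theta> lam) = H \<theta> lam"
      by (simp only: mult.assoc[symmetric] one1 mult_1)
    also have "ereal (1/(1+\<epsilon>) * (lam * \<sigma> powr p)) + H \<theta> lam \<le> ereal (lam * \<sigma> powr p) + H \<theta> lam"
      by (rule add_right_mono, rule xle) (use lJ eps in \<open>auto simp: J_def\<close>)
    finally show "ereal (1/(1+\<epsilon>)) * (INF lam\<in>J \<theta>. ereal (lam * \<sigma> powr p) + Ht \<theta> lam) \<le> ereal (lam * \<sigma> powr p) + H \<theta> lam" .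
  qed
  have c3: "(INF \<theta>\<in>\<Theta>. R Pt \<theta>) \<le> ereal (1+\<epsilon>) * (INF \<theta>\<in>\<Theta>. R Pn \<theta>)"
  proof -
    have "ereal (1/(1+\<epsilon>)) * (INF \<theta>\<in>\<Theta>. R Pt \<theta>) \<le> (INF \<theta>\<in>\<Theta>. R Pn \<theta>)"
    proof (rule INF_greatest)
      fix \<theta> assume \<theta>: "\<theta> \<in> \<Theta>"
      have "ereal (1/(1+\<epsilon>)) * (INF \<theta>\<in>\<Theta>. R Pt \<theta>) \<le> ereal (1/(1+\<epsilon>)) * R Pt \<theta>"
        by (rule ereal_mult_left_mono) (use \<theta> eps in \<open>auto intro: INF_lower\<close>)
      also have "\<dots> \<le> R Pn \<theta>" by (rule c2[OF \<theta>])
      finally show "ereal (1/(1+\<epsilon>)) * (INF \<theta>\<in>\<Theta>. R Pt \<theta>) \<le> R Pn \<theta>" .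
    qed
    hence "ereal (1+\<epsilon>) * (ereal (1/(1+\<epsilon>)) * (INF \<theta>\<in>\<Theta>. R Pt \<theta>)) \<le> ereal (1+\<epsilon>) * (INF \<theta>\<in>\<Theta>. R Pn \<theta>)"
      by (rule ereal_mult_left_mono) (use eps in simp)
    then show ?thesis by (simp only: mult.assoc[symmetric] one2 mult_1)
  qed
  have "ereal (1-\<epsilon>) * R Pn \<theta>0 \<le> ereal \<alpha> * (ereal (1+\<epsilon>) * (INF \<theta>\<in>\<Theta>. R Pn \<theta>))"
  proof -
    have "ereal \<alpha> * (INF \<theta>\<in>\<Theta>. R Pt \<theta>) \<le> ereal \<alpha> * (ereal (1+\<epsilon>) * (INF \<theta>\<in>\<Theta>. R Pn \<theta>))"
      by (rule ereal_mult_left_mono[OF c3]) (use alpha in simp)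
    then show ?thesis using c1 approx by (meson order_trans)
  qed
  hence "ereal (1/(1-\<epsilon>)) * (ereal (1-\<epsilon>) * R Pn \<theta>0) \<le> ereal (1/(1-\<epsilon>)) * (ereal \<alpha> * (ereal (1+\<epsilon>) * (INF \<theta>\<in>\<Theta>. R Pn \<theta>)))"
    by (rule ereal_mult_left_mono) (use eps in simp)
  moreover have "ereal (1/(1-\<epsilon>)) * (ereal (1-\<epsilon>) * R Pn \<theta>0) = R Pn \<theta>0"
    by (simp only: mult.assoc[symmetric] one3 mult_1)
  moreover have "ereal (1/(1-\<epsilon>)) * (ereal \<alpha> * (ereal (1+\<epsilon>) * (INF \<theta>\<in>\<Theta>. R Pn \<theta>))) = ereal (\<alpha> * (1 + \<epsilon>) / (1 - \<epsilon>)) * (INF \<theta>\<in>\<Theta>. R Pn \<theta>)"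
  proof -
    have "1/(1-\<epsilon>) * (\<alpha> * (1+\<epsilon>)) = \<alpha> * (1 + \<epsilon>) / (1 - \<epsilon>)" by simp
    then show ?thesis by (simp only: mult.assoc[symmetric] times_ereal.simps(1))
  qed
  ultimately show ?thesis by simp
qed


end
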